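(* Let $f:\mathcal X\to\mathbb R$ be bounded and measurable and let $Q$ be a probability distribution on $\mathcal X$. Then for any $\delta\in(0,1]$ and $\varepsilon>0$: (a) $Q(\{x\in\mathcal X:f(x)\le\varepsilon L_{f/\varepsilon}-\varepsilon\log(1/\delta)-\varepsilon D_{\sup\text{-}\log}(P_{f/\varepsilon},Q)\})\le\delta$; (b) $Q(\{x\in\mathcal X:f(x)\le\varepsilon L_{f/\varepsilon}-\varepsilon\log(1/\delta)\})\le\delta+D_{\mathrm{TV}}(P_{f/\varepsilon},Q)$; (c) if $f$ is Lipschitz with minimal Lipschitz constant $|f|_1$, then $Q(\{x\in\mathcal X:f(x)<\varepsilon L_{f/\varepsilon}-\varepsilon\log(2/\delta)-2\delta^{-1}|f|_1W_1(P_{f/\varepsilon},Q)\})\le\delta$.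
   Context: $\mathcal X=[0,1]^d$ with Lebesgue measure. For bounded measurable $h$: $Z_h=\int_{\mathcal X}e^h dx$, $L_h=\log Z_h$, $P_h$ the distribution with density $e^h/Z_h$. $D_{\sup\text{-}\log}(P,Q)=\|\log(dP/dQ)\|_\infty$ ($\infty$ unless mutually absolutely continuous); $D_{\mathrm{TV}}(P,Q)=\sup_A|P(A)-Q(A)|$; $W_1(P,Q)=\inf_{X\sim P,Y\sim Q}\mathbb E\|X-Y\|_2$. Lipschitz constants are with respect to the Euclidean norm. *)

theory Defs
  imports "HOL-Probability.Probability"
begin

text \<open>The domain X = [0,1]^d, rendered as the unit box of an arbitrary Euclidean space
  (so d = DIM('a)).\<close>
definition cube :: "'a::euclidean_space set" where
  "cube = cbox 0 One"

definition lebX :: "'a::euclidean_space measure" where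
  "lebX = restrict_space lborel cube"

definition Zh :: "('a::euclidean_space \<Rightarrow> real) \<Rightarrow> real" where
  "Zh h = (\<integral>x. exp (h x) \<partial>lebX)"

definition Lh :: "('a::euclidean_space \<Rightarrow> real) \<Rightarrow> real" where
  "Lh h = ln (Zh h)"

definition Ph :: "('a::euclidean_space \<Rightarrow> real) \<Rightarrow> 'a measure" where
  "Ph h = density lebX (\<lambda>x. ennreal (exp (h x) / Zh h))"

definition D_suplog :: "'a measure \<Rightarrow> 'a measure \<Rightarrow> ereal" where
  "D_suplog P Q =
     (if absolutely_continuous Q P \<and> absolutely_continuous P Q
      then esssup Q (\<lambda>x. ereal \<bar>ln (enn2real (RN_deriv Q P x))\<bar>)
      else \<infinity>)"

definition D_TV :: "'a measure \<Rightarrow> 'a measure \<Rightarrow> real" where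
  "D_TV P Q = (SUP A \<in> sets P. \<bar>measure P A - measure Q A\<bar>)"

definition couplings :: "'a measure \<Rightarrow> 'b measure \<Rightarrow> ('a \<times> 'b) measure set" where
  "couplings P Q = {\<mu>. sets \<mu> = sets (P \<Otimes>\<^sub>M Q) \<and> distr \<mu> P fst = P \<and> distr \<mu> Q snd = Q}"

definition W1 :: "'a::euclidean_space measure \<Rightarrow> 'a measure \<Rightarrow> ennreal" where
  "W1 P Q = (INF \<mu> \<in> couplings P Q. \<integral>\<^sup>+ z. ennreal (norm (fst z - snd z)) \<partial>\<mu>)"

definition lip_const :: "'a::metric_space set \<Rightarrow> ('a \<Rightarrow> real) \<Rightarrow> real" where
  "lip_const U f = Inf {C. C-lipschitz_on U f}"

end

theory Submission
  imports Defs
begin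


lemma basics:
  fixes f :: "'a::euclidean_space \<Rightarrow> real" and \<epsilon> :: real
  assumes f_meas: "f \<in> borel_measurable lebX"
    and f_bdd: "bounded (f ` cube)"
    and \<epsilon>: "0 < \<epsilon>"
  shows "prob_space (lebX :: 'a measure)" "space (lebX::'a measure) = cube"
    "0 < Zh (\<lambda>x. f x / \<epsilon>)"
    "prob_space (Ph (\<lambda>x. f x / \<epsilon>))"
    "sets (Ph (\<lambda>x. f x / \<epsilon>)) = sets lebX"
    "\<And>s. 0 < s \<Longrightarrow> emeasure (Ph (\<lambda>x. f x / \<epsilon>)) {x\<in>cube. f x \<le> \<epsilon> * Lh (\<lambda>x. f x / \<epsilon>) + \<epsilon> * ln s} \<le> ennreal s"
proof -
  have sp: "space (lebX::'a measure) = cube" by (simp add: lebX_def space_restrict_space)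
  show "space (lebX::'a measure) = cube" by fact
  have cube_sets: "(cube::'a set) \<in> sets lborel" unfolding cube_def by simp
  have mc: "emeasure lebX (cube::'a set) = 1"
    unfolding lebX_def using cube_sets
    by (subst emeasure_restrict_space) (auto simp: cube_def emeasure_lborel_cbox_eq inner_Basis)
  show PL: "prob_space (lebX :: 'a measure)"
    by (rule prob_spaceI) (simp add: sp mc)
  interpret L: prob_space "lebX :: 'a measure" by fact
  obtain M where M: "\<And>x. x \<in> cube \<Longrightarrow> \<bar>f x\<bar> \<le> M"
    using f_bdd by (auto simp: bounded_iff)
  define Z where "Z = Zh (\<lambda>x. f x / \<epsilon>)"
  have hm: "(\<lambda>x. exp (f x / \<epsilon>)) \<in> borel_measurable lebX" using f_meas by measurable
  have bnd: "\<And>x::'a. x \<in> cube \<Longrightarrow> exp (- M / \<epsilon>) \<le> exp (f x / \<epsilon>) \<and> exp (f x / \<epsilon>) \<le> exp (M / \<epsilon>)"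
  proof -
    fix x :: 'a assume "x \<in> cube"
    have "\<bar>f x\<bar> \<le> M" using M \<open>x \<in> cube\<close> by blast
    hence "- M \<le> f x" "f x \<le> M" by linarith+
    with \<epsilon> show "exp (- M / \<epsilon>) \<le> exp (f x / \<epsilon>) \<and> exp (f x / \<epsilon>) \<le> exp (M / \<epsilon>)"
      using divide_right_mono[of "- M" "f x" \<epsilon>] divide_right_mono[of "f x" M \<epsilon>] by auto
  qed
  have int: "integrable lebX (\<lambda>x. exp (f x / \<epsilon>))"
    by (rule L.integrable_const_bound[where B="exp (M / \<epsilon>)"]) (use bnd hm sp in auto)
  have "exp (- M / \<epsilon>) = (\<integral>x. exp (- M / \<epsilon>) \<partial>(lebX::'a measure))" by (simp add: measure_def sp mc)
  also have "\<dots> \<le> Z" unfolding Z_def Zh_def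
    by (rule integral_mono) (use int bnd sp in auto)
  finally show Zpos: "0 < Zh (\<lambda>x. f x / \<epsilon>)" unfolding Z_def using exp_gt_zero less_le_trans by blast
  have gm: "(\<lambda>x. ennreal (exp (f x / \<epsilon>) / Z)) \<in> borel_measurable lebX" using f_meas by measurable
  show sP: "sets (Ph (\<lambda>x. f x / \<epsilon>)) = sets lebX" by (simp add: Ph_def)
  have "emeasure (Ph (\<lambda>x. f x / \<epsilon>)) (space (Ph (\<lambda>x. f x / \<epsilon>))) = 
     (\<integral>\<^sup>+x. ennreal (exp (f x / \<epsilon>) / Z) \<partial>lebX)"
    unfolding Ph_def Z_def using gm by (subst emeasure_density) (auto intro!: nn_integral_cong simp: indicator_def Z_def)
  also have "\<dots> = ennreal (\<integral>x. exp (f x / \<epsilon>) / Z \<partial>lebX)"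
    by (rule nn_integral_eq_integral) (use int Zpos in \<open>auto simp: Z_def\<close>)
  also have "\<dots> = 1" using Zpos by (simp add: Z_def Zh_def)
  finally show "prob_space (Ph (\<lambda>x. f x / \<epsilon>))" by (rule prob_spaceI)
  fix s :: real assume s: "0 < s"
  define B where "B = {x\<in>cube. f x \<le> \<epsilon> * Lh (\<lambda>x. f x / \<epsilon>) + \<epsilon> * ln s}"
  have Bs: "B \<in> sets lebX" 
  proof -
    have "B = {x \<in> space lebX. f x \<le> \<epsilon> * Lh (\<lambda>x. f x / \<epsilon>) + \<epsilon> * ln s}" by (simp add: B_def sp)
    also have "\<dots> \<in> sets lebX" using f_meas by measurable
    finally show ?thesis .
  qed
  have le: "exp (f x / \<epsilon>) / Z \<le> s" if "x \<in> B" for x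
  proof -
    from that have "f x \<le> \<epsilon> * Lh (\<lambda>x. f x / \<epsilon>) + \<epsilon> * ln s" by (simp add: B_def)
    hence "f x / \<epsilon> \<le> Lh (\<lambda>x. f x / \<epsilon>) + ln s" using \<epsilon> by (simp add: field_simps)
    hence "exp (f x / \<epsilon>) \<le> exp (Lh (\<lambda>x. f x / \<epsilon>) + ln s)" by simp
    also have "\<dots> = Z * s" using Zpos s by (simp add: exp_add Lh_def Z_def)
    finally show ?thesis using Zpos by (simp add: Z_def field_simps)
  qed
  have "emeasure (Ph (\<lambda>x. f x / \<epsilon>)) B = (\<integral>\<^sup>+x. ennreal (exp (f x / \<epsilon>) / Z) * indicator B x \<partial>lebX)"
    unfolding Ph_def Z_def using Bs gm by (subst emeasure_density) (auto simp: Z_def)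
  also have "\<dots> \<le> (\<integral>\<^sup>+x. ennreal s * indicator B x \<partial>lebX)"
    by (rule nn_integral_mono) (auto simp: indicator_def le ennreal_leI)
  also have "\<dots> = ennreal s * emeasure lebX B" using Bs by (rule nn_integral_cmult_indicator)
  also have "\<dots> \<le> ennreal s * 1" by (intro mult_left_mono) (auto simp: L.emeasure_le_1)
  finally show "emeasure (Ph (\<lambda>x. f x / \<epsilon>)) {x\<in>cube. f x \<le> \<epsilon> * Lh (\<lambda>x. f x / \<epsilon>) + \<epsilon> * ln s} \<le> ennreal s"
    by (simp add: B_def)
qed
lemma lip_attained:
  fixes f :: "'a::metric_space \<Rightarrow> real"
  assumes "\<exists>C. C-lipschitz_on U f"
  shows "(lip_const U f)-lipschitz_on U f"
proof -
  define S where "S = {C. C-lipschitz_on U f}"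
  have ne: "S \<noteq> {}" using assms by (auto simp: S_def)
  have K: "lip_const U f = Inf S" by (simp add: lip_const_def S_def)
  have nn: "0 \<le> Inf S"
    by (rule cInf_greatest[OF ne]) (auto simp: S_def lipschitz_on_nonneg)
  show ?thesis unfolding K
  proof (rule lipschitz_onI[OF _ nn])
    fix x y assume xy: "x \<in> U" "y \<in> U"
    show "dist (f x) (f y) \<le> Inf S * dist x y"
    proof (cases "dist x y = 0")
      case True then show ?thesis by simp
    next
      case False
      hence dp: "0 < dist x y" by simp
      have "dist (f x) (f y) / dist x y \<le> Inf S"
      proof (rule cInf_greatest[OF ne])
        fix C assume "C \<in> S"
        hence "dist (f x) (f y) \<le> C * dist x y" using xy by (auto simp: S_def dest: lipschitz_onD)
        thus "dist (f x) (f y) / dist x y \<le> C" using dp by (simp add: divide_le_eq)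
      qed
      thus ?thesis using dp by (simp add: divide_le_eq)
    qed
  qed
qed

lemma partB:
  fixes f :: "'a::euclidean_space \<Rightarrow> real" and Q :: "'a measure"
    and \<delta> \<epsilon> :: real
  assumes f_meas: "f \<in> borel_measurable lebX"
    and f_bdd: "bounded (f ` cube)"
    and Q_prob: "prob_space Q"
    and Q_sets: "sets Q = sets lebX"
    and \<delta>: "0 < \<delta>" "\<delta> \<le> 1"
    and \<epsilon>: "0 < \<epsilon>"
  shows "measure Q {x \<in> cube. f x \<le> \<epsilon> * Lh (\<lambda>x. f x / \<epsilon>) - \<epsilon> * ln (1 / \<delta>)}
        \<le> \<delta> + D_TV (Ph (\<lambda>x. f x / \<epsilon>)) Q"
proof -
  note b = basics[OF f_meas f_bdd \<epsilon>]
  define P where "P = Ph (\<lambda>x. f x / \<epsilon>)"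
  define L where "L = Lh (\<lambda>x. f x / \<epsilon>)"
  interpret Q: prob_space Q by fact
  interpret P: prob_space P using b by (simp add: P_def)
  have sP: "sets P = sets lebX" using b by (simp add: P_def)
  have spP: "space P = cube" using sets_eq_imp_space_eq[OF sP] b by simp
  define A where "A = {x \<in> cube. f x \<le> \<epsilon> * L + \<epsilon> * ln \<delta>}"
  have A_eq: "{x \<in> cube. f x \<le> \<epsilon> * Lh (\<lambda>x. f x / \<epsilon>) - \<epsilon> * ln (1 / \<delta>)} = A"
    using \<delta> by (simp add: A_def L_def ln_div)
  have AP: "A \<in> sets P"
  proof -
    have "A = {x \<in> space P. f x \<le> \<epsilon> * L + \<epsilon> * ln \<delta>}" by (simp add: A_def spP)
    also have "\<dots> \<in> sets P" using f_meas sP by measurable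
    finally show ?thesis .
  qed
  have "emeasure P A \<le> ennreal \<delta>" using b(6)[OF \<delta>(1)] by (simp add: A_def P_def L_def)
  hence PA: "measure P A \<le> \<delta>" using \<delta> by (simp add: P.emeasure_eq_measure)
  have bdd: "bdd_above ((\<lambda>A. \<bar>measure P A - measure Q A\<bar>) ` sets P)"
  proof (rule bdd_aboveI2)
    fix X show "\<bar>measure P X - measure Q X\<bar> \<le> 2"
      using P.prob_le_1[of X] Q.prob_le_1[of X] measure_nonneg[of P X] measure_nonneg[of Q X] by (simp only: abs_le_iff) linarith
  qed
  have "\<bar>measure P A - measure Q A\<bar> \<le> D_TV P Q"
    unfolding D_TV_def by (rule cSUP_upper[OF AP bdd])
  hence "measure Q A \<le> \<delta> + D_TV P Q" using PA by linarith
  thus ?thesis by (simp add: A_eq P_def)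
qed

lemma partA:
  fixes f :: "'a::euclidean_space \<Rightarrow> real" and Q :: "'a measure"
    and \<delta> \<epsilon> :: real
  assumes f_meas: "f \<in> borel_measurable lebX"
    and f_bdd: "bounded (f ` cube)"
    and Q_prob: "prob_space Q"
    and Q_sets: "sets Q = sets lebX"
    and \<delta>: "0 < \<delta>" "\<delta> \<le> 1"
    and \<epsilon>: "0 < \<epsilon>"
  shows "measure Q {x \<in> cube. ereal (f x) \<le>
        ereal (\<epsilon> * Lh (\<lambda>x. f x / \<epsilon>) - \<epsilon> * ln (1 / \<delta>))
        - ereal \<epsilon> * D_suplog (Ph (\<lambda>x. f x / \<epsilon>)) Q} \<le> \<delta>"
proof -
  note b = basics[OF f_meas f_bdd \<epsilon>]
  define P where "P = Ph (\<lambda>x. f x / \<epsilon>)"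
  define L where "L = Lh (\<lambda>x. f x / \<epsilon>)"
  define D where "D = D_suplog P Q"
  interpret Q: prob_space Q by fact
  interpret P: prob_space P using b by (simp add: P_def)
  have sP: "sets P = sets lebX" using b by (simp add: P_def)
  have spP: "space P = cube" using sets_eq_imp_space_eq[OF sP] b by simp
  have spQ: "space Q = cube" using sets_eq_imp_space_eq[OF Q_sets] b by simp
  have sPQ: "sets P = sets Q" using sP Q_sets by simp
  have inf_case: "measure Q {x \<in> cube. ereal (f x) \<le>
        ereal (\<epsilon> * L - \<epsilon> * ln (1 / \<delta>)) - ereal \<epsilon> * D} \<le> \<delta>" if "D = \<infinity>"
    using that \<epsilon> \<delta> by simp
  have "measure Q {x \<in> cube. ereal (f x) \<le>
        ereal (\<epsilon> * L - \<epsilon> * ln (1 / \<delta>)) - ereal \<epsilon> * D} \<le> \<delta>"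
  proof (cases "absolutely_continuous Q P \<and> absolutely_continuous P Q")
    case False
    have "D = \<infinity>" unfolding D_def D_suplog_def by (rule if_not_P[OF False])
    thus ?thesis by (rule inf_case)
  next
    case True
    hence ac1: "absolutely_continuous Q P" and ac2: "absolutely_continuous P Q" by auto
    define RN where "RN = RN_deriv Q P"
    have Deq: "D = esssup Q (\<lambda>x. ereal \<bar>ln (enn2real (RN x))\<bar>)"
      using True by (simp add: D_def D_suplog_def RN_def)
    have AEs: "AE x in Q. ereal \<bar>ln (enn2real (RN x))\<bar> \<le> D" unfolding Deq by (rule esssup_AE)
    show ?thesis
    proof (cases D)
      case PInf thus ?thesis by (rule inf_case)
    next
      case MInf
      with AEs have "AE x in Q. False" by simp
      thus ?thesis by simp
    next
      case (real d)
      have dens: "density Q RN = P" unfolding RN_def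
        by (rule Q.density_RN_deriv[OF ac1 sPQ])
      have RNm[measurable]: "RN \<in> borel_measurable Q" unfolding RN_def by simp
      have AEfin: "AE x in Q. RN x \<noteq> \<infinity>" unfolding RN_def
        by (rule Q.RN_deriv_finite[OF _ ac1 sPQ]) (rule P.sigma_finite_measure_axioms)
      define N0 where "N0 = {x \<in> space Q. RN x = 0}"
      have N0s: "N0 \<in> sets Q" unfolding N0_def by measurable
      have "emeasure P N0 = emeasure (density Q RN) N0" by (simp add: dens)
      also have "\<dots> = (\<integral>\<^sup>+x. RN x * indicator N0 x \<partial>Q)"
        using N0s by (subst emeasure_density) auto
      also have "\<dots> = (\<integral>\<^sup>+x. 0 \<partial>Q)"
        by (rule nn_integral_cong) (auto simp: N0_def indicator_def)
      finally have "N0 \<in> null_sets P" using N0s sPQ by (simp add: null_sets_def)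
      hence "N0 \<in> null_sets Q" using ac2 by (auto simp: absolutely_continuous_def)
      hence AE0: "AE x in Q. x \<notin> N0" by (rule AE_not_in)
      have AElow: "AE x in Q. ennreal (exp (- d)) \<le> RN x"
        using AEs AEfin AE0 AE_space
      proof eventually_elim
        case (elim x)
        have "RN x \<noteq> 0" using elim by (auto simp: N0_def)
        define r where "r = enn2real (RN x)"
        have RNr: "RN x = ennreal r" unfolding r_def using elim(2) by (simp add: ennreal_enn2real_if)
        have rpos: "0 < r" unfolding r_def using \<open>RN x \<noteq> 0\<close> elim(2)
          by (simp add: enn2real_positive_iff less_top[symmetric] zero_less_iff_neq_zero)
        have "\<bar>ln r\<bar> \<le> d" using elim(1) real by (simp add: r_def)
        hence "- d \<le> ln r" by simp
        hence "exp (- d) \<le> exp (ln r)" by simp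
        hence "exp (- d) \<le> r" using rpos by simp
        thus ?case using RNr by (simp add: ennreal_leI)
      qed
      define B where "B = {x \<in> cube. f x \<le> \<epsilon> * L + \<epsilon> * ln (\<delta> * exp (- d))}"
      have k: "\<epsilon> * L - \<epsilon> * ln (1 / \<delta>) - \<epsilon> * d = \<epsilon> * L + \<epsilon> * ln (\<delta> * exp (- d))"
        using \<delta> by (simp add: ln_div ln_mult right_diff_distrib distrib_left)
      have e: "ereal (\<epsilon> * L - \<epsilon> * ln (1 / \<delta>)) - ereal \<epsilon> * D = ereal (\<epsilon> * L + \<epsilon> * ln (\<delta> * exp (- d)))"
        unfolding real k[symmetric] by simp
      have set_eq: "{x \<in> cube. ereal (f x) \<le> ereal (\<epsilon> * L - \<epsilon> * ln (1 / \<delta>)) - ereal \<epsilon> * D} = B"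
        unfolding e B_def by simp
      have BQ: "B \<in> sets Q"
      proof -
        have "B = {x \<in> space Q. f x \<le> \<epsilon> * L + \<epsilon> * ln (\<delta> * exp (- d))}" by (simp add: B_def spQ)
        also have "\<dots> \<in> sets Q" using f_meas Q_sets by measurable
        finally show ?thesis .
      qed
      have "ennreal (exp (- d)) * emeasure Q B = (\<integral>\<^sup>+x. ennreal (exp (- d)) * indicator B x \<partial>Q)"
        using BQ by (simp add: nn_integral_cmult_indicator)
      also have "\<dots> \<le> (\<integral>\<^sup>+x. RN x * indicator B x \<partial>Q)"
        by (rule nn_integral_mono_AE) (use AElow in \<open>auto elim!: eventually_mono simp: indicator_def\<close>)
      also have "\<dots> = emeasure (density Q RN) B" using BQ by (subst emeasure_density) auto
      also have "\<dots> = emeasure P B" by (simp add: dens)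
      also have "\<dots> \<le> ennreal (\<delta> * exp (- d))"
        using b(6)[of "\<delta> * exp (- d)"] \<delta> by (simp add: B_def P_def L_def)
      finally have "ennreal (exp (- d) * measure Q B) \<le> ennreal (\<delta> * exp (- d))"
        by (simp add: Q.emeasure_eq_measure ennreal_mult)
      hence "exp (- d) * measure Q B \<le> \<delta> * exp (- d)" using \<delta> by (simp add: ennreal_le_iff)
      hence "measure Q B \<le> \<delta>" by (simp add: mult.commute)
      thus ?thesis using set_eq by simp
    qed
  qed
  thus ?thesis unfolding D_def P_def L_def .
qed

lemma partC:
  fixes f :: "'a::euclidean_space \<Rightarrow> real" and Q :: "'a measure"
    and \<delta> \<epsilon> :: real
  assumes f_meas: "f \<in> borel_measurable lebX"
    and f_bdd: "bounded (f ` cube)"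
    and Q_prob: "prob_space Q"
    and Q_sets: "sets Q = sets lebX"
    and \<delta>: "0 < \<delta>" "\<delta> \<le> 1"
    and \<epsilon>: "0 < \<epsilon>"
    and lip: "\<exists>C. C-lipschitz_on cube f"
  shows "measure Q {x \<in> cube. ereal (f x) <
        ereal (\<epsilon> * Lh (\<lambda>x. f x / \<epsilon>) - \<epsilon> * ln (2 / \<delta>))
        - ereal (2 / \<delta> * lip_const cube f) * enn2ereal (W1 (Ph (\<lambda>x. f x / \<epsilon>)) Q)} \<le> \<delta>"
proof -
  note b = basics[OF f_meas f_bdd \<epsilon>]
  define P where "P = Ph (\<lambda>x. f x / \<epsilon>)"
  define L where "L = Lh (\<lambda>x. f x / \<epsilon>)"
  define K where "K = lip_const cube f"
  define W where "W = W1 P Q"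
  define c where "c = \<epsilon> * L - \<epsilon> * ln (2 / \<delta>)"
  interpret Q: prob_space Q by fact
  interpret P: prob_space P using b by (simp add: P_def)
  have sP: "sets P = sets lebX" using b by (simp add: P_def)
  have spP: "space P = cube" using sets_eq_imp_space_eq[OF sP] b by simp
  have spQ: "space Q = cube" using sets_eq_imp_space_eq[OF Q_sets] b by simp
  have sPQ: "sets P = sets Q" using sP Q_sets by simp
  have setsP_le: "{x\<in>cube. f x \<le> t} \<in> sets P" for t
  proof -
    have "{x\<in>cube. f x \<le> t} = {x\<in>space P. f x \<le> t}" by (simp add: spP)
    also have "\<dots> \<in> sets P" using f_meas sP by measurable
    finally show ?thesis .
  qed
  have setsQ_less: "{x\<in>cube. f x < t} \<in> sets Q" for t
  proof -
    have "{x\<in>cube. f x < t} = {x\<in>space Q. f x < t}" by (simp add: spQ)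
    also have "\<dots> \<in> sets Q" using f_meas Q_sets by measurable
    finally show ?thesis .
  qed
  have Klip: "K-lipschitz_on cube f" unfolding K_def by (rule lip_attained[OF lip])
  have K0: "0 \<le> K" using Klip by (rule lipschitz_on_nonneg)
  have core: "emeasure P {x\<in>cube. f x \<le> \<epsilon> * L + \<epsilon> * ln s} \<le> ennreal s" if "0 < s" for s
    using b(6)[OF that] by (simp add: P_def L_def)
  have ln2: "ln (2 / \<delta>) = - ln (\<delta> / 2)" using \<delta> by (simp add: ln_div)
  have main: "measure Q {x \<in> cube. ereal (f x) < ereal c - ereal (2 / \<delta> * K) * enn2ereal W} \<le> \<delta>"
  proof (cases "K = 0")
    case True
    have "{x \<in> cube. ereal (f x) < ereal c - ereal (2 / \<delta> * K) * enn2ereal W} = {}"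
    proof (rule ccontr)
      assume "{x \<in> cube. ereal (f x) < ereal c - ereal (2 / \<delta> * K) * enn2ereal W} \<noteq> {}"
      then obtain x0 where x0: "x0 \<in> cube" "f x0 < c" using True by (auto simp: zero_ereal_def[symmetric])
      have "\<forall>y\<in>cube. f y = f x0"
      proof
        fix y :: 'a assume "y \<in> cube"
        hence "dist (f y) (f x0) \<le> K * dist y x0" using x0 Klip by (auto dest: lipschitz_onD)
        thus "f y = f x0" using True by simp
      qed
      note allc = this
      have cc: "c = \<epsilon> * L + \<epsilon> * ln (\<delta> / 2)" unfolding c_def ln2 by simp
      have sub: "cube \<subseteq> {x\<in>cube. f x \<le> \<epsilon> * L + \<epsilon> * ln (\<delta> / 2)}"
      proof
        fix y :: 'a assume y: "y \<in> cube"
        hence "f y = f x0" using allc by blast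
        thus "y \<in> {x\<in>cube. f x \<le> \<epsilon> * L + \<epsilon> * ln (\<delta> / 2)}" using y x0(2) cc by simp
      qed
      have "emeasure P cube \<le> emeasure P {x\<in>cube. f x \<le> \<epsilon> * L + \<epsilon> * ln (\<delta> / 2)}"
        by (rule emeasure_mono[OF sub setsP_le])
      also have "\<dots> \<le> ennreal (\<delta> / 2)" using core[of "\<delta> / 2"] \<delta> by simp
      finally have "ennreal 1 \<le> ennreal (\<delta> / 2)" using P.emeasure_space_1 spP by simp
      hence "1 \<le> \<delta> / 2" using \<delta> by (simp add: ennreal_le_iff)
      thus False using \<delta> by simp
    qed
    thus ?thesis using \<delta> by (metis measure_empty order_less_imp_le)
  next
    case False
    hence Kpos: "0 < K" using K0 by simp
    show ?thesis
    proof (cases W rule: ennreal_cases)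
      case top
      have inf: "ereal (2 / \<delta> * K) * enn2ereal W = \<infinity>" using top Kpos \<delta> by simp
      have "{x \<in> cube. ereal (f x) < ereal c - ereal (2 / \<delta> * K) * enn2ereal W} = {}" by (subst inf) simp
      thus ?thesis using \<delta> by (metis measure_empty order_less_imp_le)
    next
      case (real w)
      have set_eq: "{x \<in> cube. ereal (f x) < ereal c - ereal (2 / \<delta> * K) * enn2ereal W}
          = {x \<in> cube. f x < c - 2 / \<delta> * K * w}" using real by simp
      define A where "A = {x \<in> cube. f x < c - 2 / \<delta> * K * w}"
      have AQ: "A \<in> sets Q" unfolding A_def by (rule setsQ_less)
      have eps_bound: "measure Q A \<le> \<delta> + e" if e: "0 < e" for e
      proof -
        define \<gamma> where "\<gamma> = 2 * e / \<delta>"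
        have \<gamma>: "0 < \<gamma>" using e \<delta> by (simp add: \<gamma>_def)
        define \<eta> where "\<eta> = \<delta> * \<epsilon> * ln (1 + \<gamma>) / (2 * K + 1)"
        have lnpos: "0 < ln (1 + \<gamma>)" using \<gamma> by simp
        have \<eta>: "0 < \<eta>" unfolding \<eta>_def using \<delta> \<epsilon> lnpos K0 by simp
        have "W1 P Q < ennreal (w + \<eta>)" using real \<eta> W_def by (simp add: ennreal_less_iff)
        then obtain \<mu> where \<mu>: "\<mu> \<in> couplings P Q"
          and \<mu>int: "(\<integral>\<^sup>+ z. ennreal (norm (fst z - snd z)) \<partial>\<mu>) < ennreal (w + \<eta>)"
          unfolding W1_def by (auto simp: INF_less_iff)
        have s\<mu>: "sets \<mu> = sets (P \<Otimes>\<^sub>M Q)" and \<mu>P: "distr \<mu> P fst = P" and \<mu>Q: "distr \<mu> Q snd = Q"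
          using \<mu> by (auto simp: couplings_def)
        have sp\<mu>: "space \<mu> = cube \<times> cube"
          using sets_eq_imp_space_eq[OF s\<mu>] by (simp add: space_pair_measure spP spQ)
        have fstm[measurable]: "fst \<in> measurable \<mu> P"
          using measurable_fst by (subst measurable_cong_sets[OF s\<mu> refl])
        have sndm[measurable]: "snd \<in> measurable \<mu> Q"
          using measurable_snd by (subst measurable_cong_sets[OF s\<mu> refl])
        have fstb: "fst \<in> borel_measurable \<mu>"
        proof -
          have "fst \<in> measurable \<mu> lebX" using fstm by (subst measurable_cong_sets[OF refl sP[symmetric]])
          hence "fst \<in> measurable \<mu> lborel" unfolding lebX_def by (simp add: measurable_restrict_space2_iff)
          thus ?thesis by simp
        qed
        have sndb: "snd \<in> borel_measurable \<mu>"
        proof -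
          have "snd \<in> measurable \<mu> lebX" using sndm by (subst measurable_cong_sets[OF refl Q_sets[symmetric]])
          hence "snd \<in> measurable \<mu> lborel" unfolding lebX_def by (simp add: measurable_restrict_space2_iff)
          thus ?thesis by simp
        qed
        have normm: "(\<lambda>z. ennreal (norm (fst z - snd z))) \<in> borel_measurable \<mu>"
          using fstb sndb by measurable
        define a where "a = 2 * (w + \<eta>) / \<delta>"
        have apos: "0 < a" unfolding a_def using \<eta> real \<delta> by simp
        define B where "B = {x\<in>cube. f x \<le> \<epsilon> * L + \<epsilon> * ln ((\<delta> / 2) * (1 + \<gamma>))}"
        have BP: "B \<in> sets P" unfolding B_def by (rule setsP_le)
        have key: "2 / \<delta> * K * \<eta> \<le> \<epsilon> * ln (1 + \<gamma>)"
        proof -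
          have "2 / \<delta> * K * \<eta> = (2 * K / (2 * K + 1)) * (\<epsilon> * ln (1 + \<gamma>))"
            unfolding \<eta>_def using \<delta> by (simp add: field_simps)
          also have "\<dots> \<le> 1 * (\<epsilon> * ln (1 + \<gamma>))"
            by (rule mult_right_mono) (use K0 \<epsilon> lnpos in auto)
          finally show ?thesis by simp
        qed
        have lnB: "ln ((\<delta> / 2) * (1 + \<gamma>)) = ln (\<delta> / 2) + ln (1 + \<gamma>)"
          using \<delta> \<gamma> by (subst ln_mult) auto
        have pw: "indicator A (snd z) \<le> indicator B (fst z) + ennreal (norm (fst z - snd z) / a)"
          if z: "z \<in> space \<mu>" for z :: "'a \<times> 'a"
        proof (cases "snd z \<in> A")
          case False thus ?thesis by simp
        next
          case True
          show ?thesis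
          proof (cases "a \<le> norm (fst z - snd z)")
            case True
            hence "1 \<le> norm (fst z - snd z) / a" using apos by simp
            hence "ennreal 1 \<le> ennreal (norm (fst z - snd z) / a)" by (rule ennreal_leI)
            hence one: "1 \<le> ennreal (norm (fst z - snd z) / a)" by simp
            have "indicator A (snd z) \<le> (1::ennreal)" by (simp add: indicator_def)
            also note one
            also have "ennreal (norm (fst z - snd z) / a) \<le> indicator B (fst z) + ennreal (norm (fst z - snd z) / a)"
              by (rule add_increasing) auto
            finally show ?thesis .
          next
            case False
            have zc: "fst z \<in> cube" "snd z \<in> cube" using z unfolding sp\<mu> by (simp_all add: mem_Times_iff)
            have "dist (f (fst z)) (f (snd z)) \<le> K * dist (fst z) (snd z)"
              using zc Klip by (auto dest: lipschitz_onD)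
            hence i1: "f (fst z) \<le> f (snd z) + K * norm (fst z - snd z)"
              by (simp add: dist_norm dist_real_def)
            have i2: "K * norm (fst z - snd z) \<le> K * a"
              using False K0 by (intro mult_left_mono) auto
            have i3: "f (snd z) < c - 2 / \<delta> * K * w" using \<open>snd z \<in> A\<close> by (simp add: A_def)
            have i4: "c - 2 / \<delta> * K * w + K * a = c + 2 / \<delta> * K * \<eta>"
              unfolding a_def using \<delta> by (simp add: field_simps)
            have i5: "c + \<epsilon> * ln (1 + \<gamma>) = \<epsilon> * L + \<epsilon> * ln ((\<delta> / 2) * (1 + \<gamma>))"
              unfolding c_def lnB ln2 by (simp add: algebra_simps)
            have "f (fst z) \<le> \<epsilon> * L + \<epsilon> * ln ((\<delta> / 2) * (1 + \<gamma>))"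
              using i1 i2 i3 i4 i5 key by linarith
            hence "fst z \<in> B" using zc by (simp add: B_def)
            have "indicator A (snd z) \<le> (1::ennreal)" by (simp add: indicator_def)
            also have "(1::ennreal) \<le> 1 + ennreal (norm (fst z - snd z) / a)" by (rule add_increasing2) auto
            also have "\<dots> = indicator B (fst z) + ennreal (norm (fst z - snd z) / a)"
              using \<open>fst z \<in> B\<close> by simp
            finally show ?thesis .
          qed
        qed
        have "emeasure Q A = (\<integral>\<^sup>+x. indicator A x \<partial>Q)" using AQ by simp
        also have "\<dots> = (\<integral>\<^sup>+x. indicator A x \<partial>(distr \<mu> Q snd))" by (simp add: \<mu>Q)
        also have "\<dots> = (\<integral>\<^sup>+z. indicator A (snd z) \<partial>\<mu>)"
          by (rule nn_integral_distr) (use AQ in auto)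
        also have "\<dots> \<le> (\<integral>\<^sup>+z. indicator B (fst z) + ennreal (norm (fst z - snd z) / a) \<partial>\<mu>)"
          by (rule nn_integral_mono) (rule pw)
        also have "\<dots> = (\<integral>\<^sup>+z. indicator B (fst z) \<partial>\<mu>) + (\<integral>\<^sup>+z. ennreal (norm (fst z - snd z) / a) \<partial>\<mu>)"
        proof (rule nn_integral_add)
          show "(\<lambda>z. indicator B (fst z) :: ennreal) \<in> borel_measurable \<mu>" using BP by measurable
          show "(\<lambda>z. ennreal (norm (fst z - snd z) / a)) \<in> borel_measurable \<mu>"
            using fstb sndb by measurable
        qed
        also have "(\<integral>\<^sup>+z. indicator B (fst z) \<partial>\<mu>) = (\<integral>\<^sup>+x. indicator B x \<partial>(distr \<mu> P fst))"
          by (rule nn_integral_distr[symmetric]) (use BP in auto)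
        also have "\<dots> = emeasure P B" using BP by (simp add: \<mu>P)
        also have "\<dots> \<le> ennreal ((\<delta> / 2) * (1 + \<gamma>))"
          unfolding B_def by (rule core) (use \<delta> \<gamma> in simp)
        also have "(\<integral>\<^sup>+z. ennreal (norm (fst z - snd z) / a) \<partial>\<mu>) = (\<integral>\<^sup>+z. ennreal (1 / a) * ennreal (norm (fst z - snd z)) \<partial>\<mu>)"
          using apos by (intro nn_integral_cong) (auto simp: ennreal_mult[symmetric])
        also have "\<dots> = ennreal (1 / a) * (\<integral>\<^sup>+z. ennreal (norm (fst z - snd z)) \<partial>\<mu>)"
          by (rule nn_integral_cmult) (rule normm)
        also have "\<dots> \<le> ennreal (1 / a) * ennreal (w + \<eta>)"
          using \<mu>int by (intro mult_left_mono) auto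
        also have "\<dots> = ennreal ((1 / a) * (w + \<eta>))"
          by (rule ennreal_mult[symmetric]) (use apos \<eta> real in auto)
        also have "(1 / a) * (w + \<eta>) = \<delta> / 2"
          using \<eta> real \<delta> unfolding a_def by (simp add: field_simps)
        also have "ennreal ((\<delta> / 2) * (1 + \<gamma>)) + ennreal (\<delta> / 2) = ennreal (\<delta> + e)"
          using \<delta> \<gamma> by (simp add: ennreal_plus[symmetric] \<gamma>_def field_simps del: ennreal_plus)
        finally have "emeasure Q A \<le> ennreal (\<delta> + e)" by simp
        thus ?thesis using \<delta> e by (simp add: Q.emeasure_eq_measure ennreal_le_iff del: ennreal_plus)
      qed
      have "measure Q A \<le> \<delta>" by (rule field_le_epsilon) (rule eps_bound)
      thus ?thesis using set_eq by (simp add: A_def)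
    qed
  qed
  show ?thesis using main by (simp add: c_def K_def W_def P_def L_def)
qed


theorem proposition15:
  fixes f :: "'a::euclidean_space \<Rightarrow> real" and Q :: "'a measure"
    and \<delta> \<epsilon> :: real
  assumes f_meas: "f \<in> borel_measurable lebX"
    and f_bdd: "bounded (f ` cube)"
    and Q_prob: "prob_space Q"
    and Q_sets: "sets Q = sets lebX"
    and \<delta>: "0 < \<delta>" "\<delta> \<le> 1"
    and \<epsilon>: "0 < \<epsilon>"
  shows
    "(measure Q {x \<in> cube. ereal (f x) \<le>
        ereal (\<epsilon> * Lh (\<lambda>x. f x / \<epsilon>) - \<epsilon> * ln (1 / \<delta>))
        - ereal \<epsilon> * D_suplog (Ph (\<lambda>x. f x / \<epsilon>)) Q} \<le> \<delta>) \<and>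
     (measure Q {x \<in> cube. f x \<le> \<epsilon> * Lh (\<lambda>x. f x / \<epsilon>) - \<epsilon> * ln (1 / \<delta>)}
        \<le> \<delta> + D_TV (Ph (\<lambda>x. f x / \<epsilon>)) Q) \<and>
     ((\<exists>C. C-lipschitz_on cube f) \<longrightarrow>
      measure Q {x \<in> cube. ereal (f x) <
        ereal (\<epsilon> * Lh (\<lambda>x. f x / \<epsilon>) - \<epsilon> * ln (2 / \<delta>))
        - ereal (2 / \<delta> * lip_const cube f) * enn2ereal (W1 (Ph (\<lambda>x. f x / \<epsilon>)) Q)} \<le> \<delta>)"
    using partA[OF assms] partB[OF assms] partC[OF assms] by blast

end
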